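(* Fix $\vartheta_1\in(0,\pi/2)$. The function $\Phi$ is increasing on $[\vartheta_1,\pi-\vartheta_1]$, and $\Phi(\pi-\vartheta_1)=\pi$.
   Context: For $\eta\in[\vartheta_1,\pi-\vartheta_1]$ set $\gamma(\eta)=\sqrt{1-\sin^2\vartheta_1/\sin^2\eta}$ and $\Phi(\eta)=-\eta\,\gamma(\eta)+\arccos\big(\cos\eta/\cos\vartheta_1\big)$ with $\arccos\in[0,\pi]$. *)

theory Defs
  imports "HOL-Analysis.Analysis"
begin

definition gamma_fn :: "real \<Rightarrow> real \<Rightarrow> real" where
  "gamma_fn \<theta>\<^sub>1 \<eta> = sqrt (1 - (sin \<theta>\<^sub>1)\<^sup>2 / (sin \<eta>)\<^sup>2)"

definition Phi_fn :: "real \<Rightarrow> real \<Rightarrow> real" where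
  "Phi_fn \<theta>\<^sub>1 \<eta> = - \<eta> * gamma_fn \<theta>\<^sub>1 \<eta> + arccos (cos \<eta> / cos \<theta>\<^sub>1)"

end

theory Submission
  imports Defs
begin

lemma sin_minus_xcos_pos:
  fixes x :: real assumes "0 < x" "x < pi"
  shows "0 < sin x - x * cos x"
proof -
  have "(\<lambda>t. sin t - t * cos t) 0 < (\<lambda>t. sin t - t * cos t) x"
  proof (rule DERIV_pos_imp_increasing_open[OF assms(1)])
    fix y :: real assume y: "0 < y" "y < x"
    have "((\<lambda>t. sin t - t * cos t) has_real_derivative y * sin y) (at y)"
      by (rule derivative_eq_intros refl | simp)+
    moreover have "0 < y * sin y" using y assms sin_gt_zero by simp
    ultimately show "\<exists>d. ((\<lambda>t. sin t - t * cos t) has_real_derivative d) (at y) \<and> 0 < d" by blast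
  next
    show "continuous_on {0..x} (\<lambda>t. sin t - t * cos t)" by (intro continuous_intros)
  qed
  then show ?thesis by simp
qed

lemma gamma_deriv:
  "\<lbrakk>sin x > 0; 1 - (sin t)\<^sup>2 / (sin x)\<^sup>2 > 0\<rbrakk> \<Longrightarrow>
   ((gamma_fn t) has_real_derivative (sin t)^2 * cos x / (gamma_fn t x * sin x ^3)) (at x)"
  unfolding gamma_fn_def
  apply (rule derivative_eq_intros refl | simp)+
  apply (simp add: divide_simps eval_nat_numeral)
  done

lemma arccos_deriv:
  "\<lbrakk>cos t > 0; -1 < cos x / cos t; cos x / cos t < 1\<rbrakk> \<Longrightarrow>
   ((\<lambda>x. arccos (cos x / cos t)) has_real_derivative (sin x / (cos t * sqrt (1 - (cos x/cos t)^2)))) (at x)"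
  apply (rule derivative_eq_intros refl | simp)+
  apply (simp add: divide_simps)
  done

theorem corollary5p11:
  fixes \<theta>\<^sub>1 :: real
  assumes "0 < \<theta>\<^sub>1" and "\<theta>\<^sub>1 < pi / 2"
  shows "strict_mono_on {\<theta>\<^sub>1 .. pi - \<theta>\<^sub>1} (Phi_fn \<theta>\<^sub>1)
         \<and> Phi_fn \<theta>\<^sub>1 (pi - \<theta>\<^sub>1) = pi"
proof
  define s where "s = sin \<theta>\<^sub>1"
  define c where "c = cos \<theta>\<^sub>1"
  have c0: "c > 0" unfolding c_def using assms by (intro cos_gt_zero) auto
  have s0: "s > 0" unfolding s_def using assms by (intro sin_gt_zero) auto
  have cos_pi: "cos (pi - \<theta>\<^sub>1) = - c" unfolding c_def by simp
  have cont: "continuous_on {\<theta>\<^sub>1 .. pi - \<theta>\<^sub>1} (Phi_fn \<theta>\<^sub>1)"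
  proof -
    have "\<forall>x\<in>{\<theta>\<^sub>1 .. pi - \<theta>\<^sub>1}. sin x \<noteq> 0"
    proof
      fix x assume "x \<in> {\<theta>\<^sub>1 .. pi - \<theta>\<^sub>1}"
      then have "0 < sin x" using assms by (intro sin_gt_zero) auto
      then show "sin x \<noteq> 0" by simp
    qed
    moreover have "\<forall>x\<in>{\<theta>\<^sub>1 .. pi - \<theta>\<^sub>1}. -1 \<le> cos x / cos \<theta>\<^sub>1 \<and> cos x / cos \<theta>\<^sub>1 \<le> 1"
    proof
      fix x assume x: "x \<in> {\<theta>\<^sub>1 .. pi - \<theta>\<^sub>1}"
      have "cos x \<le> c" unfolding c_def using x assms by (intro cos_monotone_0_pi_le) auto
      moreover have "- c \<le> cos x" unfolding cos_pi[symmetric] using x assms by (intro cos_monotone_0_pi_le) auto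
      ultimately show "-1 \<le> cos x / cos \<theta>\<^sub>1 \<and> cos x / cos \<theta>\<^sub>1 \<le> 1"
        using c0 by (auto simp: divide_simps c_def)
    qed
    ultimately show ?thesis unfolding Phi_fn_def gamma_fn_def
      using c0 unfolding c_def by (intro continuous_intros) auto
  qed
  have der: "\<exists>d. (Phi_fn \<theta>\<^sub>1 has_real_derivative d) (at x) \<and> 0 < d"
    if x: "\<theta>\<^sub>1 < x" "x < pi - \<theta>\<^sub>1" for x
  proof -
    define S where "S = sin x"
    define C where "C = cos x"
    have S0: "S > 0" unfolding S_def using x assms by (intro sin_gt_zero) auto
    have Cc: "C < c" unfolding c_def C_def using x assms by (intro cos_monotone_0_pi) auto
    have Cc2: "- c < C" unfolding cos_pi[symmetric] C_def using x assms by (intro cos_monotone_0_pi) auto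
    have SS: "S^2 + C^2 = 1" "s^2 + c^2 = 1" unfolding S_def C_def s_def c_def by simp_all
    have C2: "C^2 < c^2"
    proof -
      have "0 < (c - C) * (c + C)" using Cc Cc2 by (intro mult_pos_pos) auto
      then show ?thesis by (simp add: power2_eq_square algebra_simps)
    qed
    have pos: "S^2 - s^2 > 0" using SS C2 by linarith
    define r where "r = sqrt (S^2 - s^2)"
    have r0: "r > 0" unfolding r_def using pos by simp
    have r2: "r^2 = S^2 - s^2" unfolding r_def using pos by simp
    have g: "gamma_fn \<theta>\<^sub>1 x = r / S"
    proof -
      have "1 - s^2 / S^2 = (r/S)^2" using S0 r2 by (simp add: field_simps power_divide)
      then show ?thesis unfolding gamma_fn_def s_def[symmetric] S_def[symmetric]
        using r0 S0 by simp
    qed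
    have h: "sqrt (1 - (C/c)^2) = r / c"
    proof -
      have "1 - (C/c)^2 = (r/c)^2" using c0 r2 SS by (simp add: field_simps power_divide)
      then show ?thesis using r0 c0 by simp
    qed
    have u: "1 - (sin \<theta>\<^sub>1)\<^sup>2 / (sin x)\<^sup>2 > 0"
      unfolding s_def[symmetric] S_def[symmetric] using pos S0 by (simp add: field_simps)
    have d1: "(gamma_fn \<theta>\<^sub>1 has_real_derivative s^2 * C / ((r/S) * S^3)) (at x)"
      using gamma_deriv[of x \<theta>\<^sub>1, OF _ u] S0 g unfolding S_def s_def C_def by simp
    have d2: "((\<lambda>x. arccos (cos x / c)) has_real_derivative S / r) (at x)"
    proof -
      have "-1 < C / c" "C/c < 1" using Cc Cc2 c0 by (simp_all add: divide_simps)
      from arccos_deriv[of \<theta>\<^sub>1 x, folded c_def C_def, OF c0 this]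
      show ?thesis using h c0 unfolding S_def by simp
    qed
    have dP: "(Phi_fn \<theta>\<^sub>1 has_real_derivative (-1 * (r/S) + (-x) * (s^2 * C / ((r/S) * S^3)) + S / r)) (at x)"
    proof -
      have "((\<lambda>y. - y * gamma_fn \<theta>\<^sub>1 y + arccos (cos y / c)) has_real_derivative
          (-1 * gamma_fn \<theta>\<^sub>1 x + (-x) * (s^2 * C / ((r/S) * S^3)) + S / r)) (at x)"
      proof -
        have A: "((\<lambda>y. - y * gamma_fn \<theta>\<^sub>1 y) has_real_derivative
            (-1) * gamma_fn \<theta>\<^sub>1 x + (s^2 * C / ((r/S) * S^3)) * (-x)) (at x)"
          using DERIV_mult[OF DERIV_minus[OF DERIV_ident] d1] by simp
        have e: "(-1) * gamma_fn \<theta>\<^sub>1 x + (s^2 * C / ((r/S) * S^3)) * (-x) + S / r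
           = -1 * gamma_fn \<theta>\<^sub>1 x + (-x) * (s^2 * C / ((r/S) * S^3)) + S / r"
          by (simp only: mult.commute)
        show ?thesis using DERIV_add[OF A d2] unfolding e .
      qed
      then show ?thesis unfolding Phi_fn_def c_def g by (simp add: fun_eq_iff)
    qed
    have key: "0 < S - x * C" unfolding S_def C_def using x assms by (intro sin_minus_xcos_pos) auto
    have eq: "-1 * (r/S) + (-x) * (s^2 * C / ((r/S) * S^3)) + S / r = s^2 * (S - x*C) / (r * S^2)"
    proof -
      have r2': "r * r = S * S - s * s" using r2 by (simp add: power2_eq_square)
      show ?thesis using r0 S0 r2
        apply (simp add: field_simps power2_eq_square eval_nat_numeral)
        apply (simp add: r2' algebra_simps)
        done
    qed
    have "0 < s^2 * (S - x*C) / (r * S^2)" using s0 key r0 S0 by simp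
    with dP eq show ?thesis by auto
  qed
  show "strict_mono_on {\<theta>\<^sub>1 .. pi - \<theta>\<^sub>1} (Phi_fn \<theta>\<^sub>1)"
  proof (rule strict_mono_onI)
    fix a b assume ab: "a \<in> {\<theta>\<^sub>1 .. pi - \<theta>\<^sub>1}" "b \<in> {\<theta>\<^sub>1 .. pi - \<theta>\<^sub>1}" "a < b"
    show "Phi_fn \<theta>\<^sub>1 a < Phi_fn \<theta>\<^sub>1 b"
      by (rule DERIV_pos_imp_increasing_open[OF ab(3)])
        (use ab der in auto, rule continuous_on_subset[OF cont], use ab in auto)
  qed
  show "Phi_fn \<theta>\<^sub>1 (pi - \<theta>\<^sub>1) = pi"
    unfolding Phi_fn_def gamma_fn_def using c0 s0 unfolding c_def s_def by simp
qed

end
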